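(* Let $G$ be a finite connected vertex-transitive $(q+1)$-regular graph and $x_0\in V(G)$. Then, as formal power series in $t$, \[ \zeta_a(G,t)=\zeta(G,t)\,\zeta(G,-t). \]
   Context: Let $D_G$ be the symmetric digraph of $G$ (arcs $(u,v),(v,u)$ for each edge $uv$; $o(u,v)=u$, $t(u,v)=v$, $(u,v)^{-1}=(v,u)$). Generalized Ihara zeta function: $\zeta(G,t)=\exp\big(\sum_{k\ge1}\frac{N^0_k}{k}t^k\big)$, where $N^0_k$ is the number of reduced cycles of length $k$ starting at $x_0$; a cycle of length $k$ is an arc sequence $(e_1,\dots,e_k)$ with $t(e_i)=o(e_{i+1})$, $t(e_k)=o(e_1)$, starting at $x_0=o(e_1)$; reduced means neither it nor $(e_1,\dots,e_k,e_1,\dots,e_k)$ contains consecutive arcs $e,e^{-1}$. Generalized alternating zeta function: $\zeta_a(G,t)=\exp\big(\sum_{k\ge1}\frac{N^{0,a}_k}{k}t^k\big)$, where $N^{0,a}_k$ is the number of reduced $x_0$-alternating cycles of length $k$ in $D_G$. Here an alternating walk of length $r$ is an arc sequence $[e_1,\dots,e_r]$ with vertices $v_0,\dots,v_r$ such that either $e_i=(v_{i-1},v_i)$ for odd $i$ and $e_i=(v_i,v_{i-1})$ for even $i$, or $e_i=(v_i,v_{i-1})$ for odd $i$ and $e_i=(v_{i-1},v_i)$ for even $i$; an $x_0$-alternating cycle is one of even length with $v_0=v_r=x_0$; it is reduced if $e_{i+1}\ne e_i$ for all $i\le r-1$ and $e_r\ne e_1$. By vertex-transitivity these functions do not depend on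 $x_0$. *)

theory Defs
  imports "HOL-Computational_Algebra.Formal_Power_Series"
begin

text \<open>A finite simple graph is given by a vertex set V and a symmetric irreflexive
  edge relation E on V. The arcs of the symmetric digraph D_G are the pairs (u,v) with E u v.\<close>

definition arcs :: "('a \<Rightarrow> 'a \<Rightarrow> bool) \<Rightarrow> ('a \<times> 'a) set" where
  "arcs E = {(u, v). E u v}"

definition rev_arc :: "'a \<times> 'a \<Rightarrow> 'a \<times> 'a" where
  "rev_arc e = (snd e, fst e)"

text \<open>Cycles (arc sequences, o = fst, t = snd) starting at x0.\<close>
definition is_cycle :: "('a \<Rightarrow> 'a \<Rightarrow> bool) \<Rightarrow> 'a \<Rightarrow> ('a \<times> 'a) list \<Rightarrow> bool" where
  "is_cycle E x0 es \<longleftrightarrow> es \<noteq> [] \<and> set es \<subseteq> arcs E \<and> fst (hd es) = x0 \<and>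
     (\<forall>i. Suc i < length es \<longrightarrow> snd (es ! i) = fst (es ! Suc i)) \<and>
     snd (last es) = fst (hd es)"

definition is_reduced_cycle :: "('a \<Rightarrow> 'a \<Rightarrow> bool) \<Rightarrow> 'a \<Rightarrow> ('a \<times> 'a) list \<Rightarrow> bool" where
  "is_reduced_cycle E x0 es \<longleftrightarrow> is_cycle E x0 es \<and>
     (\<forall>i. Suc i < length es \<longrightarrow> es ! Suc i \<noteq> rev_arc (es ! i)) \<and>
     (\<forall>i. Suc i < 2 * length es \<longrightarrow> (es @ es) ! Suc i \<noteq> rev_arc ((es @ es) ! i))"

definition N0 :: "('a \<Rightarrow> 'a \<Rightarrow> bool) \<Rightarrow> 'a \<Rightarrow> nat \<Rightarrow> nat" where
  "N0 E x0 k = card {es. length es = k \<and> is_reduced_cycle E x0 es}"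

text \<open>Alternating walks: arcs e_1..e_r (list indices 0..r-1) with vertices v_0..v_r.
  1-based index i+1 is odd iff the 0-based index i is even.\<close>
definition alt_walk :: "('a \<Rightarrow> 'a \<Rightarrow> bool) \<Rightarrow> ('a \<times> 'a) list \<Rightarrow> 'a list \<Rightarrow> bool" where
  "alt_walk E es vs \<longleftrightarrow> set es \<subseteq> arcs E \<and> length vs = Suc (length es) \<and>
     ((\<forall>i<length es. es ! i = (if even i then (vs ! i, vs ! Suc i) else (vs ! Suc i, vs ! i))) \<or>
      (\<forall>i<length es. es ! i = (if even i then (vs ! Suc i, vs ! i) else (vs ! i, vs ! Suc i))))"

definition is_alt_cycle :: "('a \<Rightarrow> 'a \<Rightarrow> bool) \<Rightarrow> 'a \<Rightarrow> ('a \<times> 'a) list \<Rightarrow> bool" where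
  "is_alt_cycle E x0 es \<longleftrightarrow> even (length es) \<and>
     (\<exists>vs. alt_walk E es vs \<and> vs ! 0 = x0 \<and> vs ! length es = x0)"

definition is_reduced_alt_cycle :: "('a \<Rightarrow> 'a \<Rightarrow> bool) \<Rightarrow> 'a \<Rightarrow> ('a \<times> 'a) list \<Rightarrow> bool" where
  "is_reduced_alt_cycle E x0 es \<longleftrightarrow> is_alt_cycle E x0 es \<and>
     (\<forall>i. Suc i < length es \<longrightarrow> es ! Suc i \<noteq> es ! i) \<and>
     (es \<noteq> [] \<longrightarrow> last es \<noteq> hd es)"

definition N0a :: "('a \<Rightarrow> 'a \<Rightarrow> bool) \<Rightarrow> 'a \<Rightarrow> nat \<Rightarrow> nat" where
  "N0a E x0 k = card {es. length es = k \<and> is_reduced_alt_cycle E x0 es}"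

definition zeta_of_counts :: "(nat \<Rightarrow> nat) \<Rightarrow> real fps" where
  "zeta_of_counts N =
     fps_compose (fps_exp 1) (Abs_fps (\<lambda>k. if k = 0 then 0 else of_nat (N k) / of_nat k))"

definition ihara_zeta :: "('a \<Rightarrow> 'a \<Rightarrow> bool) \<Rightarrow> 'a \<Rightarrow> real fps" where
  "ihara_zeta E x0 = zeta_of_counts (N0 E x0)"

definition alt_zeta :: "('a \<Rightarrow> 'a \<Rightarrow> bool) \<Rightarrow> 'a \<Rightarrow> real fps" where
  "alt_zeta E x0 = zeta_of_counts (N0a E x0)"

end

theory Submission
  imports Defs
begin

unbundle fps_syntax


definition flip :: "bool \<Rightarrow> ('a \<times> 'a) list \<Rightarrow> ('a \<times> 'a) list" where
  "flip b es = map (\<lambda>i. if even i = b then es ! i else rev_arc (es ! i)) [0..<length es]"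

lemma flip_length[simp]: "length (flip b es) = length es"
  by (simp add: flip_def)

lemma flip_nth[simp]: "i < length es \<Longrightarrow> flip b es ! i = (if even i = b then es ! i else rev_arc (es ! i))"
  by (simp add: flip_def)

lemma rev_arc_rev_arc[simp]: "rev_arc (rev_arc e) = e"
  by (simp add: rev_arc_def)

lemma rev_arc_eq_iff[simp]: "rev_arc a = rev_arc b \<longleftrightarrow> a = b"
  by (metis rev_arc_rev_arc)

lemma flip_flip[simp]: "flip b (flip b es) = es"
  by (rule nth_equalityI) auto

lemma set_sub_nth: "set xs \<subseteq> A \<longleftrightarrow> (\<forall>i<length xs. xs ! i \<in> A)"
  by (auto simp: in_set_conv_nth) (meson nth_mem subsetD)

lemma rev_arc_arcs:
  assumes "\<And>u v. E u v \<Longrightarrow> E v u"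
  shows "rev_arc e \<in> arcs E \<longleftrightarrow> e \<in> arcs E"
  using assms by (cases e) (auto simp: rev_arc_def arcs_def)

lemma set_flip_arcs:
  assumes "\<And>u v. E u v \<Longrightarrow> E v u"
  shows "set (flip b es) \<subseteq> arcs E \<longleftrightarrow> set es \<subseteq> arcs E"
  using rev_arc_arcs[of E, OF assms] by (auto simp: set_sub_nth)

lemma doubled:
  assumes "xs \<noteq> []"
  shows "(\<forall>i. Suc i < 2 * length xs \<longrightarrow> (xs @ xs) ! Suc i \<noteq> rev_arc ((xs @ xs) ! i)) \<longleftrightarrow>
    (\<forall>i. Suc i < length xs \<longrightarrow> xs ! Suc i \<noteq> rev_arc (xs ! i)) \<and> xs ! 0 \<noteq> rev_arc (xs ! (length xs - 1))"
    (is "?L \<longleftrightarrow> ?R1 \<and> ?B")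
proof
  assume L: ?L
  have "?R1"
  proof (intro allI impI)
    fix i assume "Suc i < length xs"
    with L[rule_format, of i] show "xs ! Suc i \<noteq> rev_arc (xs ! i)" by (simp add: nth_append)
  qed
  moreover have ?B
    using L[rule_format, of "length xs - 1"] assms by (simp add: nth_append)
  ultimately show "?R1 \<and> ?B" by simp
next
  assume R: "?R1 \<and> ?B"
  show ?L
  proof (intro allI impI)
    fix i assume i: "Suc i < 2 * length xs"
    consider "Suc i < length xs" | "Suc i = length xs" | "length xs \<le> i" by linarith
    then show "(xs @ xs) ! Suc i \<noteq> rev_arc ((xs @ xs) ! i)"
    proof cases
      case 1 then show ?thesis using R by (simp add: nth_append)
    next
      case 2
      then have "i = length xs - 1" by simp
      then show ?thesis using R 2 by (simp add: nth_append)
    next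
      case 3
      then have "Suc (i - length xs) < length xs" using i by simp
      then have "xs ! Suc (i - length xs) \<noteq> rev_arc (xs ! (i - length xs))" using R by blast
      moreover have "Suc i - length xs = Suc (i - length xs)" using 3 by simp
      ultimately show ?thesis using 3 by (simp add: nth_append)
    qed
  qed
qed

definition walk_cond :: "'a \<Rightarrow> ('a \<times> 'a) list \<Rightarrow> bool" where
  "walk_cond x0 c \<longleftrightarrow> fst (hd c) = x0 \<and>
     (\<forall>i. Suc i < length c \<longrightarrow> snd (c ! i) = fst (c ! Suc i)) \<and> snd (last c) = fst (hd c)"

lemma if_not_P_swap: "(if \<not> P then a else b) = (if P then b else a)"
  by simp

lemma eq_True: "(x = True) = x" and eq_False: "(x = False) = (\<not> x)" by simp_all

lemma walk_lemma:
  assumes "c \<noteq> []"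
  shows "(\<exists>vs. length vs = Suc (length c) \<and> (\<forall>i<length c. c ! i = (vs ! i, vs ! Suc i)) \<and>
            vs ! 0 = x0 \<and> vs ! length c = x0) \<longleftrightarrow> walk_cond x0 c"
proof
  assume "\<exists>vs. length vs = Suc (length c) \<and> (\<forall>i<length c. c ! i = (vs ! i, vs ! Suc i)) \<and>
            vs ! 0 = x0 \<and> vs ! length c = x0"
  then obtain vs where vs: "length vs = Suc (length c)" "\<forall>i<length c. c ! i = (vs ! i, vs ! Suc i)"
    "vs ! 0 = x0" "vs ! length c = x0" by blast
  have h: "hd c = c ! 0" "last c = c ! (length c - 1)" using assms by (simp_all add: hd_conv_nth last_conv_nth)
  show "walk_cond x0 c" unfolding walk_cond_def h
    using vs assms by auto
next
  assume w: "walk_cond x0 c"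
  define vs where "vs = map fst c @ [x0]"
  have h: "hd c = c ! 0" "last c = c ! (length c - 1)" using assms by (simp_all add: hd_conv_nth last_conv_nth)
  have "\<forall>i<length c. c ! i = (vs ! i, vs ! Suc i)"
  proof (intro allI impI)
    fix i assume i: "i < length c"
    show "c ! i = (vs ! i, vs ! Suc i)"
    proof (cases "Suc i < length c")
      case True
      then show ?thesis using w i unfolding walk_cond_def vs_def
        by (simp add: nth_append prod_eq_iff)
    next
      case False
      then have "i = length c - 1" using i by simp
      then show ?thesis using w i assms unfolding walk_cond_def vs_def h
        by (simp add: nth_append prod_eq_iff)
    qed
  qed
  moreover have "vs ! 0 = x0" using w assms unfolding walk_cond_def vs_def h
    by (simp add: nth_append)
  ultimately show "\<exists>vs. length vs = Suc (length c) \<and> (\<forall>i<length c. c ! i = (vs ! i, vs ! Suc i)) \<and>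
            vs ! 0 = x0 \<and> vs ! length c = x0"
    by (intro exI[of _ vs]) (simp add: vs_def nth_append)
qed

lemma mode_flip:
  "(\<forall>i<length es. es ! i = (if even i = b then (vs ! i, vs ! Suc i) else (vs ! Suc i, vs ! i))) \<longleftrightarrow>
   (\<forall>i<length es. flip b es ! i = (vs ! i, vs ! Suc i))"
proof -
  have "es ! i = (if even i = b then (vs ! i, vs ! Suc i) else (vs ! Suc i, vs ! i)) \<longleftrightarrow>
        (if even i = b then es ! i else rev_arc (es ! i)) = (vs ! i, vs ! Suc i)" for i
    by (cases "es ! i") (auto simp: rev_arc_def)
  then show ?thesis by simp
qed

lemma red_flip:
  "(\<forall>i. Suc i < length es \<longrightarrow> es ! Suc i \<noteq> es ! i) \<longleftrightarrow>
   (\<forall>i. Suc i < length es \<longrightarrow> flip b es ! Suc i \<noteq> rev_arc (flip b es ! i))"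
proof -
  have "Suc i < length es \<Longrightarrow> (es ! Suc i \<noteq> es ! i) \<longleftrightarrow> (flip b es ! Suc i \<noteq> rev_arc (flip b es ! i))" for i
    by auto
  then show ?thesis by auto
qed

lemma bnd_flip:
  assumes "es \<noteq> []" "even (length es)"
  shows "last es \<noteq> hd es \<longleftrightarrow> flip b es ! 0 \<noteq> rev_arc (flip b es ! (length es - 1))"
proof -
  have "odd (length es - 1)" using assms by (cases "length es") auto
  then show ?thesis using assms by (auto simp: hd_conv_nth last_conv_nth)
qed

lemma red_cycle_iff:
  "is_reduced_cycle E x0 c \<longleftrightarrow> c \<noteq> [] \<and> set c \<subseteq> arcs E \<and> walk_cond x0 c \<and>
     (\<forall>i. Suc i < length c \<longrightarrow> c ! Suc i \<noteq> rev_arc (c ! i)) \<and> c ! 0 \<noteq> rev_arc (c ! (length c - 1))"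
  unfolding is_reduced_cycle_def is_cycle_def walk_cond_def
  using doubled[of c] by auto

lemma alt_char:
  assumes sym: "\<And>u v. E u v \<Longrightarrow> E v u" and k: "length es > 0"
  shows "is_reduced_alt_cycle E x0 es \<longleftrightarrow> even (length es) \<and> (\<exists>b. is_reduced_cycle E x0 (flip b es))"
proof -
  have ne: "es \<noteq> []" using k by auto
  have fne: "flip b es \<noteq> []" for b using k by (metis flip_length length_greater_0_conv)
  have walkb: "(\<exists>vs. length vs = Suc (length es) \<and>
      (\<forall>i<length es. es ! i = (if even i = b then (vs ! i, vs ! Suc i) else (vs ! Suc i, vs ! i))) \<and>
      vs ! 0 = x0 \<and> vs ! length es = x0) \<longleftrightarrow> walk_cond x0 (flip b es)" for b
    unfolding mode_flip using walk_lemma[OF fne, of b x0] by simp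
  have "is_alt_cycle E x0 es \<longleftrightarrow> even (length es) \<and> set es \<subseteq> arcs E \<and>
     (\<exists>b. \<exists>vs. length vs = Suc (length es) \<and>
      (\<forall>i<length es. es ! i = (if even i = b then (vs ! i, vs ! Suc i) else (vs ! Suc i, vs ! i))) \<and>
      vs ! 0 = x0 \<and> vs ! length es = x0)"
  proof -
    have e1: "(\<lambda>i. (if even i then (vs ! i, vs ! Suc i) else (vs ! Suc i, vs ! i))) =
              (\<lambda>i. (if even i = True then (vs ! i, vs ! Suc i) else (vs ! Suc i, vs ! i)))" for vs :: "'a list"
      by simp
    have e2: "(\<lambda>i. (if even i then (vs ! Suc i, vs ! i) else (vs ! i, vs ! Suc i))) =
              (\<lambda>i. (if even i = False then (vs ! i, vs ! Suc i) else (vs ! Suc i, vs ! i)))" for vs :: "'a list"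
      by auto
    have ex_bool: "(\<exists>b. P b) \<longleftrightarrow> P True \<or> P False" for P by (metis (full_types))
    show ?thesis
      unfolding is_alt_cycle_def alt_walk_def ex_bool
      by (simp only: eq_True eq_False if_not_P_swap) blast
  qed
  then have "is_reduced_alt_cycle E x0 es \<longleftrightarrow> even (length es) \<and> set es \<subseteq> arcs E \<and>
     (\<exists>b. walk_cond x0 (flip b es)) \<and> (\<forall>i. Suc i < length es \<longrightarrow> es ! Suc i \<noteq> es ! i) \<and>
     last es \<noteq> hd es"
    unfolding is_reduced_alt_cycle_def walkb using ne by blast
  also have "\<dots> \<longleftrightarrow> even (length es) \<and> (\<exists>b. is_reduced_cycle E x0 (flip b es))"
  proof -
    have "set es \<subseteq> arcs E \<and> walk_cond x0 (flip b es) \<and>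
        (\<forall>i. Suc i < length es \<longrightarrow> es ! Suc i \<noteq> es ! i) \<and> last es \<noteq> hd es
      \<longleftrightarrow> is_reduced_cycle E x0 (flip b es)" if ev: "even (length es)" for b
      unfolding red_cycle_iff flip_length red_flip[of es b]
        bnd_flip[OF ne ev, of b] using fne[of b] set_flip_arcs[of E b es] assms(1) by blast
    then show ?thesis by blast
  qed
  finally show ?thesis .
qed



lemma count_lemma:
  assumes fin: "finite V"
    and edges_in: "\<And>u v. E u v \<Longrightarrow> u \<in> V \<and> v \<in> V"
    and sy: "\<And>u v. E u v \<Longrightarrow> E v u"
    and irrefl: "\<And>u. \<not> E u u"
    and k: "k > 0"
  shows "N0a E x0 k = (if even k then 2 * N0 E x0 k else 0)"
proof (cases "even k")
  case False
  then have "{es. length es = k \<and> is_reduced_alt_cycle E x0 es} = {}"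
    using alt_char[where E=E, OF sy] k by auto
  then show ?thesis using False unfolding N0a_def by (simp only: card.empty) simp
next
  case ev: True
  define R where "R = {c. length c = k \<and> is_reduced_cycle E x0 c}"
  have S: "{es. length es = k \<and> is_reduced_alt_cycle E x0 es} = flip True ` R \<union> flip False ` R"
  proof
    show "{es. length es = k \<and> is_reduced_alt_cycle E x0 es} \<subseteq> flip True ` R \<union> flip False ` R"
    proof
      fix es assume "es \<in> {es. length es = k \<and> is_reduced_alt_cycle E x0 es}"
      then have l: "length es = k" and "is_reduced_alt_cycle E x0 es" by auto
      then obtain b where b: "is_reduced_cycle E x0 (flip b es)" using alt_char[where E=E, OF sy] k by auto
      then have "flip b es \<in> R" using l by (simp add: R_def)
      then have "es \<in> flip b ` R" by (metis flip_flip image_eqI)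
      then show "es \<in> flip True ` R \<union> flip False ` R" by (cases b) auto
    qed
    show "flip True ` R \<union> flip False ` R \<subseteq> {es. length es = k \<and> is_reduced_alt_cycle E x0 es}"
    proof
      fix es assume "es \<in> flip True ` R \<union> flip False ` R"
      then obtain b c where c: "c \<in> R" "es = flip b c" by auto
      then have l: "length es = k" by (simp add: R_def)
      have "is_reduced_cycle E x0 (flip b es)" using c by (simp add: R_def)
      then have "is_reduced_alt_cycle E x0 es" using alt_char[where E=E, OF sy] k ev l by auto
      then show "es \<in> {es. length es = k \<and> is_reduced_alt_cycle E x0 es}" using l by simp
    qed
  qed
  have arcsfin: "finite (arcs E)"
    by (rule finite_subset[of _ "V \<times> V"]) (auto simp: arcs_def edges_in fin)
  have finR: "finite R"
    by (rule finite_subset[OF _ finite_lists_length_eq[OF arcsfin, of k]])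
       (auto simp: R_def is_reduced_cycle_def is_cycle_def)
  have inj: "inj_on (flip b) R" for b
    by (rule inj_on_inverseI[where g = "flip b"]) simp
  have disj: "flip True ` R \<inter> flip False ` R = {}"
  proof (rule ccontr)
    assume "flip True ` R \<inter> flip False ` R \<noteq> {}"
    then obtain c1 c2 where c: "c1 \<in> R" "c2 \<in> R" "flip True c1 = flip False c2" by auto
    have l: "length c1 = k" "length c2 = k" using c by (auto simp: R_def)
    have "flip True c1 ! 0 = flip False c2 ! 0" using c by simp
    then have eq: "c1 ! 0 = rev_arc (c2 ! 0)" using l k by simp
    have "fst (c1 ! 0) = x0" "fst (c2 ! 0) = x0" "c1 ! 0 \<in> arcs E"
      using c l k by (auto simp: R_def is_reduced_cycle_def is_cycle_def hd_conv_nth)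
    then have "E x0 x0" using eq by (cases "c1 ! 0"; cases "c2 ! 0") (auto simp: rev_arc_def arcs_def)
    then show False using irrefl by blast
  qed
  have "N0a E x0 k = card (flip True ` R) + card (flip False ` R)"
    unfolding N0a_def S by (rule card_Un_disjoint) (use finR disj in auto)
  also have "\<dots> = 2 * card R" using card_image[OF inj] by simp
  finally show ?thesis using ev by (simp add: N0_def R_def)
qed




lemma ode_unique:
  fixes H K C :: "real fps"
  assumes "fps_deriv H = H * C" "fps_deriv K = K * C" "H $ 0 = K $ 0"
  shows "H = K"
proof -
  have "H $ n = K $ n" for n
  proof (induction n rule: less_induct)
    case (less n)
    show ?case
    proof (cases n)
      case 0 then show ?thesis using assms(3) by simp
    next
      case (Suc m)
      have "of_nat (m+1) * H $ (m+1) = (H*C) $ m" using assms(1)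
        by (metis fps_deriv_nth)
      also have "\<dots> = (K*C) $ m" unfolding fps_mult_nth
        using less Suc by (intro sum.cong) auto
      also have "\<dots> = of_nat (m+1) * K $ (m+1)" using assms(2)
        by (metis fps_deriv_nth)
      finally show ?thesis using Suc by simp
    qed
  qed
  then show ?thesis by (simp add: fps_eq_iff)
qed

lemma deriv_exp_oo:
  fixes A :: "real fps"
  assumes "A $ 0 = 0"
  shows "fps_deriv (fps_exp 1 oo A) = (fps_exp 1 oo A) * fps_deriv A"
  using assms by (simp add: fps_compose_deriv)

lemma exp_compose_add:
  fixes A B :: "real fps"
  assumes "A $ 0 = 0" "B $ 0 = 0"
  shows "(fps_exp 1 oo A) * (fps_exp 1 oo B) = fps_exp 1 oo (A + B)"
proof (rule ode_unique[where C = "fps_deriv A + fps_deriv B"])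
  show "fps_deriv ((fps_exp 1 oo A) * (fps_exp 1 oo B)) =
    (fps_exp 1 oo A) * (fps_exp 1 oo B) * (fps_deriv A + fps_deriv B)"
    using assms by (simp add: deriv_exp_oo algebra_simps)
  show "fps_deriv (fps_exp 1 oo (A + B)) = (fps_exp 1 oo (A + B)) * (fps_deriv A + fps_deriv B)"
    using assms by (simp add: deriv_exp_oo)
  show "((fps_exp 1 oo A) * (fps_exp 1 oo B)) $ 0 = (fps_exp 1 oo (A + B)) $ 0"
    by simp
qed

lemma zeta_main:
  fixes N Na :: "nat \<Rightarrow> nat"
  assumes "\<And>k. k > 0 \<Longrightarrow> Na k = (if even k then 2 * N k else 0)"
  shows "zeta_of_counts Na = zeta_of_counts N * fps_compose (zeta_of_counts N) (- fps_X)"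
proof -
  define A where "A = Abs_fps (\<lambda>k. if k = 0 then 0 else of_nat (N k) / of_nat k :: real)"
  define Aa where "Aa = Abs_fps (\<lambda>k. if k = 0 then 0 else of_nat (Na k) / of_nat k :: real)"
  have A0: "A $ 0 = 0" by (simp add: A_def)
  have X0: "(- fps_X :: real fps) $ 0 = 0" by simp
  have "fps_compose (zeta_of_counts N) (- fps_X) = fps_exp 1 oo (A oo - fps_X)"
    unfolding zeta_of_counts_def A_def[symmetric]
    by (rule fps_compose_assoc[symmetric, OF X0 A0])
  moreover have "(A oo - fps_X) $ 0 = 0" using A0 by simp
  moreover have "Aa = A + (A oo - fps_X)"
    unfolding fps_compose_uminus'
    by (auto simp: fps_eq_iff A_def Aa_def assms field_simps)
  ultimately show ?thesis
    unfolding zeta_of_counts_def A_def[symmetric] Aa_def[symmetric]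
    using exp_compose_add[OF A0] by simp
qed



theorem proposition3:
  fixes V :: "'a set" and E :: "'a \<Rightarrow> 'a \<Rightarrow> bool" and q :: nat and x0 :: 'a
  assumes fin: "finite V"
    and edges_in: "\<And>u v. E u v \<Longrightarrow> u \<in> V \<and> v \<in> V"
    and sym: "\<And>u v. E u v \<Longrightarrow> E v u"
    and irrefl: "\<And>u. \<not> E u u"
    and connected: "\<forall>u\<in>V. \<forall>v\<in>V. E\<^sup>*\<^sup>* u v"
    and vtrans: "\<forall>u\<in>V. \<forall>v\<in>V. \<exists>f. bij_betw f V V \<and>
                   (\<forall>a\<in>V. \<forall>b\<in>V. E a b \<longleftrightarrow> E (f a) (f b)) \<and> f u = v"
    and regular: "\<forall>v\<in>V. card {u\<in>V. E v u} = q + 1"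
    and x0: "x0 \<in> V"
  shows "alt_zeta E x0 = ihara_zeta E x0 * fps_compose (ihara_zeta E x0) (- fps_X)"
proof -
  have "\<And>k. k > 0 \<Longrightarrow> N0a E x0 k = (if even k then 2 * N0 E x0 k else 0)"
    by (rule count_lemma[OF fin edges_in sym irrefl]) auto
  then show ?thesis unfolding alt_zeta_def ihara_zeta_def by (rule zeta_main)
qed


end
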